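(* Let $p$ be a prime and $m\ge 0$ an integer, and let $C_m=\{a\in\mathbb{Z}_p:\delta^m a=0\}$. Then the composition $C_m\subset\mathbb{Z}_p\to\mathbb{Z}_p/p^m\mathbb{Z}_p$ of the inclusion with the reduction map is a bijection.
   Context: $\mathbb{Z}_p$ is the ring of $p$-adic integers, $\delta:\mathbb{Z}_p\to\mathbb{Z}_p$ is the Fermat quotient operator $\delta a=(a-a^p)/p$, and $\delta^m$ is its $m$-th iterate ($\delta^0$ is the identity). *)

theory Defs
  imports "HOL-Computational_Algebra.Primes"
begin

text \<open>p-adic integers as the inverse limit of the rings Z/p^n Z: an element is a
  compatible sequence of residues x n in {0..<p^n} with x (n+1) mod p^n = x n.\<close>

definition zp :: "int \<Rightarrow> (nat \<Rightarrow> int) set" where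
  "zp p = {x. \<forall>n. 0 \<le> x n \<and> x n < p ^ n \<and> x (Suc n) mod p ^ n = x n}"

definition zp_zero :: "nat \<Rightarrow> int" where
  "zp_zero = (\<lambda>n. 0)"

definition zp_sub :: "int \<Rightarrow> (nat \<Rightarrow> int) \<Rightarrow> (nat \<Rightarrow> int) \<Rightarrow> (nat \<Rightarrow> int)" where
  "zp_sub p x y = (\<lambda>n. (x n - y n) mod p ^ n)"

definition zp_pow :: "int \<Rightarrow> (nat \<Rightarrow> int) \<Rightarrow> nat \<Rightarrow> (nat \<Rightarrow> int)" where
  "zp_pow p x k = (\<lambda>n. (x n) ^ k mod p ^ n)"

text \<open>Exact division by p of an element divisible by p (i.e. with x 1 = 0).\<close>
definition zp_divp :: "int \<Rightarrow> (nat \<Rightarrow> int) \<Rightarrow> (nat \<Rightarrow> int)" where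
  "zp_divp p x = (\<lambda>n. x (Suc n) div p)"

definition zp_delta :: "int \<Rightarrow> (nat \<Rightarrow> int) \<Rightarrow> (nat \<Rightarrow> int)" where
  "zp_delta p a = zp_divp p (zp_sub p a (zp_pow p a (nat p)))"

definition C_set :: "int \<Rightarrow> nat \<Rightarrow> (nat \<Rightarrow> int) set" where
  "C_set p m = {a \<in> zp p. (zp_delta p ^^ m) a = zp_zero}"

text \<open>Reduction Z_p -> Z_p/p^m Z_p, with Z_p/p^m Z_p identified canonically with
  Z/p^m Z = {0..<p^m}: a maps to its m-th component.\<close>
definition zp_red :: "nat \<Rightarrow> (nat \<Rightarrow> int) \<Rightarrow> int" where
  "zp_red m a = a m"

end

theory Submission imports Defs "HOL-Number_Theory.Number_Theory" begin

lemma fermat_int: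
  fixes p x :: int assumes "prime p" shows "p dvd x ^ nat p - x"
proof -
  define n where "n = nat (x mod p)"
  have p1: "p > 1" using assms prime_gt_1_int by blast
  have xn: "[x = int n] (mod p)" unfolding n_def cong_def using p1 by simp
  have pn: "prime (nat p)" using assms by simp
  have "[n ^ nat p = n] (mod nat p)"
  proof (cases "nat p dvd n")
    case True then show ?thesis
      by (metis assms cong_0_iff cong_pow cong_sym cong_trans not_prime_0
    power_0_left prime_nat_iff_prime)
  next
    case False
    then have "[n ^ (nat p - 1) = 1] (mod nat p)" using fermat_theorem pn by blast
    then have "[n ^ (nat p - 1) * n = 1 * n] (mod nat p)" by (rule cong_mult) simp
    moreover have "n ^ (nat p - 1) * n = n ^ nat p"
      using pn power_minus_mult prime_gt_0_nat by blast
    ultimately show ?thesis by simp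
  qed
  then have "[int n ^ nat p = int n] (mod p)" using p1
    by (metis assms cong_int_iff int_eq_iff of_nat_power prime_ge_0_int)
  moreover have "[x ^ nat p = int n ^ nat p] (mod p)" using xn by (rule cong_pow)
  ultimately have "[x ^ nat p = x] (mod p)" using xn
    by (meson cong_sym cong_trans)
  then show ?thesis by (simp add: cong_iff_dvd_diff)
qed

definition Dq :: "int \<Rightarrow> int \<Rightarrow> int" where "Dq p x = (x - x ^ nat p) div p"

lemma Dq_mult: assumes "prime p" shows "p * Dq p x = x - x ^ nat p"
proof -
  have "p dvd x - x ^ nat p"
    using fermat_int[OF assms, of x] by (simp add: dvd_diff_commute)
  then show ?thesis unfolding Dq_def by simp
qed

lemma K_lemma:
  fixes p u y :: int
  assumes "prime p" "p dvd u"
  shows "p * u dvd (y + u) ^ nat p - y ^ nat p"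
proof -
  define S where "S = (\<Sum>i<nat p. y ^ (nat p - Suc i) * (y + u) ^ i)"
  have eq: "(y + u) ^ nat p - y ^ nat p = u * S"
    using power_diff_sumr2[of "y + u" "nat p" y] unfolding S_def by simp
  have yu: "[y + u = y] (mod p)" using assms(2) by (simp add: cong_iff_dvd_diff)
  have c: "[S = (\<Sum>i<nat p. y ^ (nat p - Suc i) * y ^ i)] (mod p)"
    unfolding S_def
    by (rule cong_sum, rule cong_mult, simp, rule cong_pow, rule yu)
  have "(\<Sum>i<nat p. y ^ (nat p - Suc i) * y ^ i) = (\<Sum>i<nat p. y ^ (nat p - 1))"
  proof (rule sum.cong)
    fix i assume "i \<in> {..<nat p}"
    then have "nat p - Suc i + i = nat p - 1" by simp
    then show "y ^ (nat p - Suc i) * y ^ i = y ^ (nat p - 1)" by (metis power_add)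
  qed simp
  also have "\<dots> = p * y ^ (nat p - 1)"
    using prime_ge_0_int[OF assms(1)] by simp
  finally have "[S = p * y ^ (nat p - 1)] (mod p)" using c by simp
  then have "p dvd S" using cong_dvd_iff dvd_triv_left by blast
  then have "p * u dvd S * u" by (rule mult_dvd_mono[OF _ dvd_refl])
  then show ?thesis unfolding eq by (simp only: mult.commute[of u S])
qed

lemma D_shift:
  fixes p y t :: int
  assumes "prime p"
  shows "\<exists>v. Dq p (y + p ^ Suc j * t) - Dq p y = p ^ j * t - p ^ Suc j * v"
proof -
  define u where "u = p ^ Suc j * t"
  have "p dvd u" unfolding u_def by simp
  from K_lemma[OF assms this, of y] obtain w where w: "(y + u) ^ nat p - y ^ nat p = p * u * w"
    by (auto simp: dvd_def)
  have "p * (Dq p (y + u) - Dq p y) = u - ((y + u) ^ nat p - y ^ nat p)"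
    using Dq_mult[OF assms, of "y+u"] Dq_mult[OF assms, of y] by (simp add: algebra_simps)
  also have "\<dots> = u - p * u * w" by (simp only: w)
  also have "\<dots> = p * (p ^ j * t - p ^ Suc j * (t * w))"
    unfolding u_def by (simp add: algebra_simps)
  finally have "Dq p (y + u) - Dq p y = p ^ j * t - p ^ Suc j * (t * w)"
    using prime_gt_0_int[OF assms] by simp
  then show ?thesis unfolding u_def by blast
qed

lemma L1:
  assumes "prime p" "p ^ Suc k dvd x - y"
  shows "p ^ k dvd Dq p x - Dq p y"
proof -
  obtain t where t: "x = y + p ^ Suc k * t" using assms(2) by (auto simp: dvd_def algebra_simps)
  obtain v where v: "Dq p (y + p ^ Suc k * t) - Dq p y = p ^ k * t - p ^ Suc k * v"
    using D_shift[OF assms(1)] by blast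
  have "Dq p x - Dq p y = p ^ k * (t - p * v)" using t v by (simp add: algebra_simps)
  then show ?thesis by simp
qed

lemma L2step:
  assumes "prime p" "p ^ Suc j dvd x - y" "p ^ Suc j dvd Dq p x - Dq p y"
  shows "p ^ Suc (Suc j) dvd x - y"
proof -
  obtain t where t: "x = y + p ^ Suc j * t" using assms(2) by (auto simp: dvd_def algebra_simps)
  obtain v where v: "Dq p (y + p ^ Suc j * t) - Dq p y = p ^ j * t - p ^ Suc j * v"
    using D_shift[OF assms(1)] by blast
  have "p ^ Suc j dvd p ^ j * t - p ^ Suc j * v" using assms(3) t v by simp
  then have "p ^ Suc j dvd (p ^ j * t - p ^ Suc j * v) + p ^ Suc j * v"
    by (rule dvd_add) simp
  then have "p ^ Suc j dvd p ^ j * t" by simp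
  then have "p dvd t" using prime_gt_0_int[OF assms(1)] by (simp add: mult.commute)
  then show ?thesis using t by (simp add: mult_dvd_mono)
qed

lemma L2:
  assumes "prime p" "p dvd x - y" "p ^ k dvd Dq p x - Dq p y"
  shows "p ^ Suc k dvd x - y"
proof -
  have "\<forall>j. j \<le> k \<longrightarrow> p ^ Suc j dvd x - y"
  proof (intro allI)
    fix j show "j \<le> k \<longrightarrow> p ^ Suc j dvd x - y"
    proof (induction j)
      case 0 then show ?case using assms(2) by simp
    next
      case (Suc j)
      show ?case
      proof
        assume "Suc j \<le> k"
        then have "p ^ Suc j dvd p ^ k" by (rule le_imp_power_dvd)
        then have "p ^ Suc j dvd Dq p x - Dq p y" using assms(3) dvd_trans by blast
        then show "p ^ Suc (Suc j) dvd x - y" using Suc L2step[OF assms(1)] \<open>Suc j \<le> k\<close> by simp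
      qed
    qed
  qed
  then show ?thesis by simp
qed

lemma L3:
  assumes "prime p"
  shows "\<exists>x. p dvd x - r \<and> p ^ k dvd Dq p x - z"
proof (induction k)
  case 0 then show ?case by (intro exI[of _ r]) simp
next
  case (Suc k)
  from Suc.IH obtain x where x: "p dvd x - r" and xd: "p ^ k dvd Dq p x - z" by blast
  from xd obtain w where w: "Dq p x - z = p ^ k * w" by (rule dvdE)
  define x' where "x' = x + p ^ Suc k * (-w)"
  obtain v where v: "Dq p x' - Dq p x = p ^ k * (-w) - p ^ Suc k * v"
    unfolding x'_def using D_shift[OF assms] by blast
  have "Dq p x' - z = (Dq p x' - Dq p x) + (Dq p x - z)" by simp
  also have "\<dots> = p ^ k * (-w) - p ^ Suc k * v + p ^ k * w" by (simp only: v w)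
  also have "\<dots> = - (p ^ Suc k * v)" by simp
  finally have A: "Dq p (x + p ^ Suc k * (-w)) - z = - (p ^ Suc k * v)" unfolding x'_def .
  have eq: "(x + p ^ Suc k * (-w)) - r = (x - r) - p * (p ^ k * w)" by (simp add: algebra_simps)
  have "p dvd (x - r) - p * (p ^ k * w)" by (rule dvd_diff[OF x]) simp
  then have B: "p dvd (x + p ^ Suc k * (-w)) - r" by (simp only: eq)
  have C: "p ^ Suc k dvd Dq p (x + p ^ Suc k * (-w)) - z" unfolding A by (rule dvd_minus_iff[THEN iffD2]) simp
  from B C show ?case by blast
qed


lemma eq_of_dvd:
  fixes x y m :: int
  assumes "0 \<le> x" "x < m" "0 \<le> y" "y < m" "m dvd x - y"
  shows "x = y"
proof -
  have "x mod m = y mod m" using assms(5) by (simp add: mod_eq_dvd_iff)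
  then show ?thesis using assms by simp
qed

lemma zpD:
  assumes "a \<in> zp p"
  shows "0 \<le> a n" "a n < p ^ n" "a (Suc n) mod p ^ n = a n"
  using assms unfolding zp_def by auto

lemma zp_mod:
  assumes "a \<in> zp p" "j \<le> n" "p > 0"
  shows "a n mod p ^ j = a j"
  using assms(2)
proof (induction n rule: dec_induct)
  case base then show ?case using zpD[OF assms(1), of j] by simp
next
  case (step n)
  have "p ^ j dvd p ^ n" using step(1) by (rule le_imp_power_dvd)
  then have "a (Suc n) mod p ^ j = (a (Suc n) mod p ^ n) mod p ^ j" by (simp add: mod_mod_cancel)
  also have "\<dots> = a n mod p ^ j" using zpD(3)[OF assms(1), of n] by simp
  finally show ?case using step(3) by simp
qed

lemma zp_dvd:
  assumes "a \<in> zp p" "j \<le> n" "p > 0"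
  shows "p ^ j dvd a n - a j"
proof -
  have "a n mod p ^ j = a j mod p ^ j" using zp_mod[OF assms] zpD[OF assms(1), of j] by simp
  then show ?thesis by (simp add: mod_eq_dvd_iff)
qed

lemma delta_eq:
  assumes "prime p"
  shows "zp_delta p a n = Dq p (a (Suc n)) mod p ^ n"
proof -
  define X where "X = a (Suc n)"
  have p0: "p \<noteq> 0" using assms by auto
  have "zp_delta p a n = ((X - X ^ nat p mod p ^ Suc n) mod p ^ Suc n) div p"
    unfolding zp_delta_def zp_divp_def zp_sub_def zp_pow_def X_def by (rule refl)
  also have "(X - X ^ nat p mod p ^ Suc n) mod p ^ Suc n = (X - X ^ nat p) mod p ^ Suc n"
    by (rule mod_diff_right_eq)
  also have "X - X ^ nat p = p * Dq p X" using Dq_mult[OF assms] by (rule sym)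
  also have "p ^ Suc n = p * p ^ n" by (rule power_Suc)
  also have "(p * Dq p X) mod (p * p ^ n) = p * (Dq p X mod p ^ n)" by (rule mult_mod_right[symmetric])
  also have "p * (Dq p X mod p ^ n) div p = Dq p X mod p ^ n" using p0 by (rule nonzero_mult_div_cancel_left)
  finally show ?thesis unfolding X_def .
qed

lemma delta_zp:
  assumes "prime p" "a \<in> zp p"
  shows "zp_delta p a \<in> zp p"
proof -
  have p0: "p > 0" using assms prime_gt_0_int by blast
  { fix n
    have r: "0 \<le> zp_delta p a n \<and> zp_delta p a n < p ^ n"
      unfolding delta_eq[OF assms(1)] using p0 by simp
    have "p ^ Suc n dvd a (Suc (Suc n)) - a (Suc n)"
      using zp_dvd[OF assms(2), of "Suc n" "Suc (Suc n)"] p0 by simp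
    then have d: "p ^ n dvd Dq p (a (Suc (Suc n))) - Dq p (a (Suc n))" by (rule L1[OF assms(1)])
    have "zp_delta p a (Suc n) mod p ^ n = (Dq p (a (Suc (Suc n))) mod p ^ Suc n) mod p ^ n"
      unfolding delta_eq[OF assms(1)] ..
    also have "\<dots> = Dq p (a (Suc (Suc n))) mod p ^ n"
      by (simp add: mod_mod_cancel le_imp_power_dvd)
    also have "\<dots> = Dq p (a (Suc n)) mod p ^ n" using d by (simp add: mod_eq_dvd_iff)
    also have "\<dots> = zp_delta p a n" unfolding delta_eq[OF assms(1)] ..
    finally have "0 \<le> zp_delta p a n \<and> zp_delta p a n < p ^ n \<and>
        zp_delta p a (Suc n) mod p ^ n = zp_delta p a n" using r by simp }
  then show ?thesis unfolding zp_def by blast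
qed

lemma lift:
  assumes "prime p" "c \<in> zp p"
  shows "\<exists>a\<in>zp p. p dvd a 1 - r \<and> zp_delta p a = c"
proof -
  have p0: "p > 0" using assms prime_gt_0_int by blast
  define G where "G n x \<longleftrightarrow> 0 \<le> x \<and> x < p ^ n \<and> p dvd x - r \<and> p ^ (n - 1) dvd Dq p x - c (n - 1)"
    for n :: nat and x :: int
  have Gex: "\<exists>x. G n x" if n1: "n \<ge> 1" for n
  proof -
    obtain x0 where x0: "p dvd x0 - r" "p ^ (n - 1) dvd Dq p x0 - c (n - 1)"
      using L3[OF assms(1)] by blast
    define x where "x = x0 mod p ^ n"
    have d: "p ^ n dvd x - x0" unfolding x_def by (simp add: mod_eq_dvd_iff[symmetric])
    have "p dvd p ^ n" using n1 by (simp add: dvd_power)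
    then have "p dvd x - x0" using d dvd_trans by blast
    then have "p dvd (x - x0) + (x0 - r)" using x0(1) by (rule dvd_add)
    then have g3: "p dvd x - r" by simp
    have "p ^ Suc (n - 1) dvd x - x0" using d n1 by simp
    then have "p ^ (n - 1) dvd Dq p x - Dq p x0" by (rule L1[OF assms(1)])
    then have "p ^ (n - 1) dvd (Dq p x - Dq p x0) + (Dq p x0 - c (n - 1))" using x0(2) by (rule dvd_add)
    then have g4: "p ^ (n - 1) dvd Dq p x - c (n - 1)" by simp
    have "0 \<le> x" "x < p ^ n" unfolding x_def using p0 by simp_all
    with g3 g4 show ?thesis unfolding G_def by blast
  qed
  have Guniq: "x = y" if n1: "n \<ge> 1" and gx: "G n x" and gy: "G n y" for n x y
  proof -
    have "p dvd x - r" "p dvd y - r" using gx gy unfolding G_def by simp_all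
    then have "p dvd (x - r) - (y - r)" by (rule dvd_diff)
    then have a1: "p dvd x - y" by simp
    have "p ^ (n - 1) dvd Dq p x - c (n - 1)" "p ^ (n - 1) dvd Dq p y - c (n - 1)"
      using gx gy unfolding G_def by simp_all
    then have "p ^ (n - 1) dvd (Dq p x - c (n - 1)) - (Dq p y - c (n - 1))" by (rule dvd_diff)
    then have a2: "p ^ (n - 1) dvd Dq p x - Dq p y" by simp
    have "p ^ Suc (n - 1) dvd x - y" by (rule L2[OF assms(1) a1 a2])
    then have "p ^ n dvd x - y" using n1 by simp
    then show ?thesis using gx gy unfolding G_def by (intro eq_of_dvd) auto
  qed
  define a where "a n = (if n = 0 then 0 else (SOME x. G n x))" for n
  have aG: "G n (a n)" if "n \<ge> 1" for n
  proof -
    have "a n = (SOME x. G n x)" unfolding a_def using that by simp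
    then show ?thesis using someI_ex[OF Gex[OF that]] by simp
  qed
  have compat: "a (Suc n) mod p ^ n = a n" for n
  proof (cases "n = 0")
    case True then show ?thesis unfolding a_def by simp
  next
    case False
    then have n1: "n \<ge> 1" by simp
    define y where "y = a (Suc n)"
    define x where "x = y mod p ^ n"
    have gy: "G (Suc n) y" unfolding y_def by (rule aG) simp
    have d: "p ^ n dvd x - y" unfolding x_def by (simp add: mod_eq_dvd_iff[symmetric])
    have "p dvd p ^ n" using n1 by (simp add: dvd_power)
    then have "p dvd x - y" using d dvd_trans by blast
    moreover have "p dvd y - r" using gy unfolding G_def by simp
    ultimately have "p dvd (x - y) + (y - r)" by (rule dvd_add)
    then have g3: "p dvd x - r" by simp
    have "p ^ Suc (n - 1) dvd x - y" using d n1 by simp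
    then have e1: "p ^ (n - 1) dvd Dq p x - Dq p y" by (rule L1[OF assms(1)])
    have "p ^ (n - 1) dvd p ^ n" by (rule le_imp_power_dvd) simp
    moreover have "p ^ n dvd Dq p y - c n" using gy unfolding G_def by simp
    ultimately have e2: "p ^ (n - 1) dvd Dq p y - c n" by (rule dvd_trans)
    have e3: "p ^ (n - 1) dvd c n - c (n - 1)" using zp_dvd[OF assms(2), of "n - 1" n] p0 by simp
    have "p ^ (n - 1) dvd (Dq p x - Dq p y) + (Dq p y - c n) + (c n - c (n - 1))"
      using e1 e2 e3 by (intro dvd_add)
    then have g4: "p ^ (n - 1) dvd Dq p x - c (n - 1)" by simp
    have "0 \<le> x" "x < p ^ n" unfolding x_def using p0 by simp_all
    with g3 g4 have "G n x" unfolding G_def by blast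
    then show ?thesis using Guniq[OF n1 _ aG[OF n1]] unfolding x_def y_def by blast
  qed
  have azp: "a \<in> zp p"
    unfolding zp_def
  proof (intro CollectI allI conjI)
    fix n
    show "0 \<le> a n" "a n < p ^ n"
      using aG[of n] unfolding G_def a_def by (cases "n = 0"; simp)+
    show "a (Suc n) mod p ^ n = a n" by (rule compat)
  qed
  have "zp_delta p a = c"
  proof
    fix n
    have "p ^ n dvd Dq p (a (Suc n)) - c n" using aG[of "Suc n"] unfolding G_def by simp
    then have "Dq p (a (Suc n)) mod p ^ n = c n mod p ^ n" by (simp add: mod_eq_dvd_iff)
    also have "\<dots> = c n" using zpD[OF assms(2), of n] by simp
    finally show "zp_delta p a n = c n" unfolding delta_eq[OF assms(1)] .
  qed
  moreover have "p dvd a 1 - r" using aG[of 1] unfolding G_def by simp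
  ultimately show ?thesis using azp by blast
qed

lemma C_delta:
  assumes "prime p" "a \<in> C_set p (Suc k)"
  shows "zp_delta p a \<in> C_set p k"
proof -
  have "a \<in> zp p" and z: "(zp_delta p ^^ Suc k) a = zp_zero" using assms(2) unfolding C_set_def by auto
  moreover have "(zp_delta p ^^ k) (zp_delta p a) = (zp_delta p ^^ Suc k) a"
    by (simp only: funpow_Suc_right o_apply)
  ultimately show ?thesis using delta_zp[OF assms(1)] unfolding C_set_def by simp
qed

lemma main_claim:
  assumes "prime p"
  shows "(\<forall>a\<in>C_set p m. \<forall>a'\<in>C_set p m. a m = a' m \<longrightarrow> a = a') \<and>
         (\<forall>b. 0 \<le> b \<and> b < p ^ m \<longrightarrow> (\<exists>a\<in>C_set p m. a m = b))"
proof (induction m)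
  case 0
  have pp: "p > 0" using assms prime_gt_0_int by blast
  have "zp_zero \<in> zp p" unfolding zp_def zp_zero_def using pp by simp
  moreover note pp
  ultimately show ?case unfolding C_set_def by (auto simp: zp_zero_def)
next
  case (Suc k)
  have p0: "p > 0" using assms prime_gt_0_int by blast
  from Suc.IH have IHi: "\<And>a a'. a \<in> C_set p k \<Longrightarrow> a' \<in> C_set p k \<Longrightarrow> a k = a' k \<Longrightarrow> a = a'"
    and IHe: "\<And>b. 0 \<le> b \<Longrightarrow> b < p ^ k \<Longrightarrow> \<exists>a\<in>C_set p k. a k = b" by blast+
  have inj: "a = a'" if aC: "a \<in> C_set p (Suc k)" and aC': "a' \<in> C_set p (Suc k)"
    and eq: "a (Suc k) = a' (Suc k)" for a a'
  proof -
    have az: "a \<in> zp p" and az': "a' \<in> zp p" using aC aC' unfolding C_set_def by auto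
    have "zp_delta p a k = zp_delta p a' k" unfolding delta_eq[OF assms] eq ..
    then have dd: "zp_delta p a = zp_delta p a'"
      using IHi[OF C_delta[OF assms aC] C_delta[OF assms aC']] by blast
    show ?thesis
    proof
      fix n show "a n = a' n"
      proof (cases n)
        case 0 then show ?thesis using zpD(1,2)[OF az, of 0] zpD(1,2)[OF az', of 0] by simp
      next
        case (Suc j)
        have m1: "x (Suc i) mod p = x 1" if "x \<in> zp p" for x i
          using zp_mod[OF that, of 1 "Suc i"] p0 by simp
        have "a (Suc j) mod p = a' (Suc j) mod p"
          using m1[OF az, of j] m1[OF az, of k] m1[OF az', of j] m1[OF az', of k] eq by simp
        then have h1: "p dvd a (Suc j) - a' (Suc j)" by (simp add: mod_eq_dvd_iff)
        have "zp_delta p a j = zp_delta p a' j" using dd by simp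
        then have "Dq p (a (Suc j)) mod p ^ j = Dq p (a' (Suc j)) mod p ^ j"
          unfolding delta_eq[OF assms] .
        then have h2: "p ^ j dvd Dq p (a (Suc j)) - Dq p (a' (Suc j))" by (simp add: mod_eq_dvd_iff)
        have "p ^ Suc j dvd a (Suc j) - a' (Suc j)" by (rule L2[OF assms h1 h2])
        then show ?thesis unfolding Suc
          using zpD(1,2)[OF az, of "Suc j"] zpD(1,2)[OF az', of "Suc j"] by (intro eq_of_dvd) auto
      qed
    qed
  qed
  have ex: "\<exists>a\<in>C_set p (Suc k). a (Suc k) = b" if b: "0 \<le> b" "b < p ^ Suc k" for b
  proof -
    obtain c where cC: "c \<in> C_set p k" and ck: "c k = Dq p b mod p ^ k"
      using IHe[of "Dq p b mod p ^ k"] p0 by auto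
    have cz: "c \<in> zp p" using cC unfolding C_set_def by auto
    obtain a where az: "a \<in> zp p" and a1: "p dvd a 1 - b" and da: "zp_delta p a = c"
      using lift[OF assms cz, of b] by blast
    have "(zp_delta p ^^ Suc k) a = (zp_delta p ^^ k) (zp_delta p a)"
      by (simp only: funpow_Suc_right o_apply)
    then have aC: "a \<in> C_set p (Suc k)" using az da cC unfolding C_set_def by simp
    have "p ^ 1 dvd a (Suc k) - a 1" using zp_dvd[OF az, of 1 "Suc k"] p0 by simp
    then have "p dvd a (Suc k) - a 1" by simp
    then have "p dvd (a (Suc k) - a 1) + (a 1 - b)" using a1 by (rule dvd_add)
    then have h1: "p dvd a (Suc k) - b" by simp
    have "zp_delta p a k = c k" using da by simp
    then have "Dq p (a (Suc k)) mod p ^ k = Dq p b mod p ^ k" unfolding delta_eq[OF assms] ck .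
    then have h2: "p ^ k dvd Dq p (a (Suc k)) - Dq p b" by (simp add: mod_eq_dvd_iff)
    have "p ^ Suc k dvd a (Suc k) - b" by (rule L2[OF assms h1 h2])
    then have "a (Suc k) = b" using zpD(1,2)[OF az, of "Suc k"] b by (intro eq_of_dvd) auto
    with aC show ?thesis by blast
  qed
  show ?case using inj ex by blast
qed

theorem lemma4p1:
  fixes p :: int and m :: nat
  assumes "prime p"
  shows "bij_betw (zp_red m) (C_set p m) {0..<p ^ m}"
proof -
  note mc = main_claim[OF assms, of m]
  have "inj_on (zp_red m) (C_set p m)" unfolding inj_on_def zp_red_def using mc by blast
  moreover have "zp_red m ` C_set p m = {0..<p ^ m}"
  proof
    show "zp_red m ` C_set p m \<subseteq> {0..<p ^ m}"
      unfolding zp_red_def C_set_def using zpD(1,2) by fastforce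
    show "{0..<p ^ m} \<subseteq> zp_red m ` C_set p m"
    proof
      fix b assume "b \<in> {0..<p ^ m}"
      then obtain a where "a \<in> C_set p m" "a m = b" using mc by auto
      then show "b \<in> zp_red m ` C_set p m" unfolding zp_red_def by (metis image_eqI)
    qed
  qed
  ultimately show ?thesis unfolding bij_betw_def by blast
qed

end
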